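(* Let $X_1,\dots,X_n$ be mutually independent random variables with given distributions on ranges $D_1,\dots,D_n$ and product distribution $\mu$, and let $A_1,\dots,A_m$ be arbitrary events, $A_i$ determined by the variables indexed by $\mathrm{vbl}(A_i)\subseteq[n]$. Run the General Partial Rejection Sampling algorithm: draw all variables independently; while at least one $A_i$ occurs under the current assignment $\sigma$, compute $\mathrm{Res}(\sigma)$ and independently resample all variables in $\bigcup_{i\in\mathrm{Res}(\sigma)}\mathrm{vbl}(A_i)$; when no $A_i$ occurs, output the current assignment. If the algorithm halts, its output is distributed as $\mu$ conditioned on $\bigwedge_{i=1}^m\overline{A_i}$.
   Context: Dependency graph $G$ on $[m]$: distinct $i,j$ adjacent iff $\mathrm{vbl}(A_i)\cap\mathrm{vbl}(A_j)\neq\emptyset$. Notation: $\mathrm{Bad}(\sigma)=\{i:\sigma\in A_i\}$; $\partial S=\{i\notin S: i\text{ adjacent to some }j\in S\}$; $\mathrm{vbl}(S)=\bigcup_{i\in S}\mathrm{vbl}(A_i)$. We write $A_i\cap\sigma_S=\emptyset$ if either $\mathrm{vbl}(A_i)\cap\mathrm{vbl}(S)=\emptyset$ or no assignment agreeing with $\sigma$ on $\mathrm{vbl}(A_i)\cap\mathrm{vbl}(S)$ belongs to $A_i$; otherwise $A_i\cap\sigma_S\ne\emptyset$. $\mathrm{Res}(\sigma)$ is the output of: start with $R=\mathrm{Bad}(\sigma)$, $N=\emptyset$; while $\partial R\setminus N\neq\emptyset$, for each $i\in\partial R\setminus N$ (with $R$ the current set) put $i$ into $R$ if $A_i\cap\sigma_R\ne\emptyset$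 and into $N$ otherwise; output $R$. *)

theory Defs
  imports "HOL-Probability.Probability" "HOL-Library.While_Combinator"
begin

text \<open>Variables are indexed by {0..<n}, events by {0..<m}. An assignment is a function
  nat => 'd (values outside {0..<n} are irrelevant; in the product pmf they equal a
  default value d). vbl i is the set of variables event i depends on; A i is the event
  (a set of assignments).\<close>

definition vblS :: "(nat \<Rightarrow> nat set) \<Rightarrow> nat set \<Rightarrow> nat set" where
  "vblS vbl S = (\<Union>i\<in>S. vbl i)"

definition Bad :: "nat \<Rightarrow> (nat \<Rightarrow> (nat \<Rightarrow> 'd) set) \<Rightarrow> (nat \<Rightarrow> 'd) \<Rightarrow> nat set" where
  "Bad m A \<sigma> = {i. i < m \<and> \<sigma> \<in> A i}"

definition bdry :: "nat \<Rightarrow> (nat \<Rightarrow> nat set) \<Rightarrow> nat set \<Rightarrow> nat set" where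
  "bdry m vbl S = {i. i < m \<and> i \<notin> S \<and> (\<exists>j\<in>S. j \<noteq> i \<and> vbl i \<inter> vbl j \<noteq> {})}"

definition assignments :: "nat \<Rightarrow> (nat \<Rightarrow> 'd set) \<Rightarrow> (nat \<Rightarrow> 'd) set" where
  "assignments n Dom = {\<tau>. \<forall>j<n. \<tau> j \<in> Dom j}"

text \<open>"A_i \<inter> \<sigma>_S \<noteq> {}".\<close>
definition meets :: "nat \<Rightarrow> (nat \<Rightarrow> 'd set) \<Rightarrow> (nat \<Rightarrow> nat set) \<Rightarrow> (nat \<Rightarrow> (nat \<Rightarrow> 'd) set)
                      \<Rightarrow> nat \<Rightarrow> (nat \<Rightarrow> 'd) \<Rightarrow> nat set \<Rightarrow> bool" where
  "meets n Dom vbl A i \<sigma> S \<longleftrightarrow>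
     vbl i \<inter> vblS vbl S \<noteq> {} \<and>
     (\<exists>\<tau>\<in>assignments n Dom. (\<forall>j\<in>vbl i \<inter> vblS vbl S. \<tau> j = \<sigma> j) \<and> \<tau> \<in> A i)"

text \<open>One round of the Res procedure (all i in the current \<partial>R - N are examined w.r.t. the
  R of the start of the round).\<close>
definition res_step :: "nat \<Rightarrow> nat \<Rightarrow> (nat \<Rightarrow> 'd set) \<Rightarrow> (nat \<Rightarrow> nat set) \<Rightarrow> (nat \<Rightarrow> (nat \<Rightarrow> 'd) set)
                      \<Rightarrow> (nat \<Rightarrow> 'd) \<Rightarrow> nat set \<times> nat set \<Rightarrow> nat set \<times> nat set" where
  "res_step n m Dom vbl A \<sigma> RN =
     (let R = fst RN; N = snd RN; C = bdry m vbl R - N in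
       (R \<union> {i\<in>C. meets n Dom vbl A i \<sigma> R}, N \<union> {i\<in>C. \<not> meets n Dom vbl A i \<sigma> R}))"

definition Res :: "nat \<Rightarrow> nat \<Rightarrow> (nat \<Rightarrow> 'd set) \<Rightarrow> (nat \<Rightarrow> nat set) \<Rightarrow> (nat \<Rightarrow> (nat \<Rightarrow> 'd) set)
                   \<Rightarrow> (nat \<Rightarrow> 'd) \<Rightarrow> nat set" where
  "Res n m Dom vbl A \<sigma> =
     fst (while (\<lambda>RN. bdry m vbl (fst RN) - snd RN \<noteq> {}) (res_step n m Dom vbl A \<sigma>) (Bad m A \<sigma>, {}))"

partial_function (spmf) gprs_loop ::
  "(nat \<Rightarrow> 'd pmf) \<Rightarrow> 'd \<Rightarrow> ((nat \<Rightarrow> 'd) \<Rightarrow> bool) \<Rightarrow> ((nat \<Rightarrow> 'd) \<Rightarrow> nat set)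
     \<Rightarrow> (nat \<Rightarrow> 'd) \<Rightarrow> (nat \<Rightarrow> 'd) spmf" where
  "gprs_loop P d halt rs \<sigma> =
     (if halt \<sigma> then return_spmf \<sigma>
      else bind_spmf (spmf_of_pmf (Pi_pmf (rs \<sigma>) d P))
             (\<lambda>\<tau>. gprs_loop P d halt rs (\<lambda>j. if j \<in> rs \<sigma> then \<tau> j else \<sigma> j)))"

definition prod_dist :: "nat \<Rightarrow> (nat \<Rightarrow> 'd pmf) \<Rightarrow> 'd \<Rightarrow> (nat \<Rightarrow> 'd) pmf" where
  "prod_dist n P d = Pi_pmf {0..<n} d P"

text \<open>General Partial Rejection Sampling; output distribution (subprobability: the
  missing mass is non-termination).\<close>
definition GPRS :: "nat \<Rightarrow> nat \<Rightarrow> (nat \<Rightarrow> 'd set) \<Rightarrow> (nat \<Rightarrow> 'd pmf) \<Rightarrow> 'd \<Rightarrow> (nat \<Rightarrow> nat set)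
                    \<Rightarrow> (nat \<Rightarrow> (nat \<Rightarrow> 'd) set) \<Rightarrow> (nat \<Rightarrow> 'd) spmf" where
  "GPRS n m Dom P d vbl A =
     bind_spmf (spmf_of_pmf (prod_dist n P d))
       (gprs_loop P d (\<lambda>\<sigma>. Bad m A \<sigma> = {}) (\<lambda>\<sigma>. vblS vbl (Res n m Dom vbl A \<sigma>)))"

end

theory Submission
  imports Defs
begin

locale gprs =
  fixes n m :: nat and Dom :: "nat \<Rightarrow> 'd set" and P :: "nat \<Rightarrow> 'd pmf" and d :: 'd
    and vbl :: "nat \<Rightarrow> nat set" and A :: "nat \<Rightarrow> (nat \<Rightarrow> 'd) set"
  assumes ranges: "\<And>j. j < n \<Longrightarrow> set_pmf (P j) \<subseteq> Dom j"
    and vbl_sub: "\<And>i. i < m \<Longrightarrow> vbl i \<subseteq> {0..<n}"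
    and determined: "\<And>i \<sigma> \<tau>. i < m \<Longrightarrow> (\<forall>j\<in>vbl i. \<sigma> j = \<tau> j) \<Longrightarrow> (\<sigma> \<in> A i \<longleftrightarrow> \<tau> \<in> A i)"
begin

abbreviation "mu \<equiv> prod_dist n P d"
abbreviation "g \<sigma> \<equiv> res_step n m Dom vbl A \<sigma>"
abbreviation "bb \<equiv> (\<lambda>RN. bdry m vbl (fst RN) - snd RN \<noteq> {})"
definition "it \<sigma> k = (g \<sigma> ^^ k) (Bad m A \<sigma>, {})"

lemma set_mu: "set_pmf mu = {\<sigma>. \<forall>j. (j < n \<longrightarrow> \<sigma> j \<in> set_pmf (P j)) \<and> (j \<ge> n \<longrightarrow> \<sigma> j = d)}"
  unfolding prod_dist_def set_Pi_pmf[OF finite_atLeastLessThan] PiE_dflt_def by (simp add: not_less)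

lemma mu_assign: "\<sigma> \<in> set_pmf mu \<Longrightarrow> \<sigma> \<in> assignments n Dom"
  using ranges by (auto simp: set_mu assignments_def)

lemma bdry_sub: "bdry m vbl R \<subseteq> {..<m}" by (auto simp: bdry_def)
lemma Bad_sub: "Bad m A \<sigma> \<subseteq> {..<m}" by (auto simp: Bad_def)

lemma g_mono: "fst s \<subseteq> fst (g \<sigma> s)" "snd s \<subseteq> snd (g \<sigma> s)"
  by (auto simp: res_step_def Let_def)

lemma g_fix: "\<not> bb s \<Longrightarrow> g \<sigma> s = s"
  by (cases s) (auto simp: res_step_def Let_def)

lemma g_sub: "fst s \<union> snd s \<subseteq> {..<m} \<Longrightarrow> fst (g \<sigma> s) \<union> snd (g \<sigma> s) \<subseteq> {..<m}"
  using bdry_sub by (auto simp: res_step_def Let_def)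

lemma g_union: "fst (g \<sigma> s) \<union> snd (g \<sigma> s) = fst s \<union> snd s \<union> (bdry m vbl (fst s) - snd s)"
  by (auto simp: res_step_def Let_def)

lemma it_sub: "fst (it \<sigma> k) \<union> snd (it \<sigma> k) \<subseteq> {..<m}"
  by (induction k) (auto simp: it_def Bad_sub intro!: g_sub[simplified])

lemma it_Suc: "it \<sigma> (Suc k) = g \<sigma> (it \<sigma> k)"
  by (simp add: it_def)

lemma it_progress: "\<not> bb (it \<sigma> k) \<or> k \<le> card (fst (it \<sigma> k) \<union> snd (it \<sigma> k))"
proof (induction k)
  case 0 then show ?case by simp
next
  case (Suc k)
  show ?case
  proof (cases "bb (it \<sigma> k)")
    case False
    then show ?thesis by (simp add: it_Suc g_fix)
  next
    case True
    with Suc have k: "k \<le> card (fst (it \<sigma> k) \<union> snd (it \<sigma> k))" by simp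
    have fin: "finite (fst (it \<sigma> k) \<union> snd (it \<sigma> k) \<union> (bdry m vbl (fst (it \<sigma> k)) - snd (it \<sigma> k)))"
      using it_sub[of \<sigma> k] bdry_sub by (meson finite_Un finite_Diff finite_lessThan finite_subset)
    have "fst (it \<sigma> k) \<union> snd (it \<sigma> k) \<subset> fst (it \<sigma> k) \<union> snd (it \<sigma> k) \<union> (bdry m vbl (fst (it \<sigma> k)) - snd (it \<sigma> k))"
      using True by (auto simp: bdry_def)
    then have "card (fst (it \<sigma> k) \<union> snd (it \<sigma> k)) < card (fst (it \<sigma> (Suc k)) \<union> snd (it \<sigma> (Suc k)))"
      unfolding it_Suc g_union using fin by (intro psubset_card_mono) auto
    with k show ?thesis by simp
  qed
qed

lemma it_stop: "\<not> bb (it \<sigma> (Suc m))"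
proof -
  have "card (fst (it \<sigma> (Suc m)) \<union> snd (it \<sigma> (Suc m))) \<le> card {..<m::nat}"
    using it_sub[of \<sigma> "Suc m"] by (intro card_mono) auto
  then have "card (fst (it \<sigma> (Suc m)) \<union> snd (it \<sigma> (Suc m))) \<le> m" by simp
  then show ?thesis using it_progress[of \<sigma> "Suc m"] by linarith
qed

lemma it_fix_add: "\<not> bb (it \<sigma> k) \<Longrightarrow> it \<sigma> (k + j) = it \<sigma> k"
  by (induction j) (auto simp: it_Suc g_fix)

lemma it_fix_eq: "\<not> bb (it \<sigma> k1) \<Longrightarrow> \<not> bb (it \<sigma> k2) \<Longrightarrow> it \<sigma> k1 = it \<sigma> k2"
  by (metis add.commute it_fix_add le_add_diff_inverse nat_le_linear)

lemma it_mono_add: "fst (it \<sigma> k) \<subseteq> fst (it \<sigma> (k + j))"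
proof (induction j)
  case (Suc j)
  have "fst (it \<sigma> (k + j)) \<subseteq> fst (it \<sigma> (k + Suc j))" by (simp add: it_Suc g_mono)
  with Suc show ?case by blast
qed simp

lemma Res_it: "Res n m Dom vbl A \<sigma> = fst (it \<sigma> (Suc m))"
proof -
  have ex: "\<exists>k. \<not> bb ((g \<sigma> ^^ k) (Bad m A \<sigma>, {}))" using it_stop unfolding it_def by blast
  let ?k = "LEAST k. \<not> bb ((g \<sigma> ^^ k) (Bad m A \<sigma>, {}))"
  have "\<not> bb (it \<sigma> ?k)" using LeastI_ex[OF ex] by (simp add: it_def)
  then have "it \<sigma> ?k = it \<sigma> (Suc m)" using it_stop it_fix_eq by blast
  then show ?thesis
    unfolding Res_def while_def while_option_def using ex by (simp add: it_def)
qed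

lemma it_le_Res: "fst (it \<sigma> k) \<subseteq> Res n m Dom vbl A \<sigma>"
proof -
  have "fst (it \<sigma> k) \<subseteq> fst (it \<sigma> (k + Suc m))" by (rule it_mono_add)
  also have "it \<sigma> (k + Suc m) = it \<sigma> (Suc m)"
    using it_fix_add[OF it_stop, of \<sigma> k] by (simp add: add.commute)
  finally show ?thesis by (simp add: Res_it)
qed

lemma Bad_Res: "Bad m A \<sigma> \<subseteq> Res n m Dom vbl A \<sigma>"
  using it_le_Res[of \<sigma> 0] by (simp add: it_def)

lemma Res_sub: "Res n m Dom vbl A \<sigma> \<subseteq> {..<m}"
  using it_sub[of \<sigma> "Suc m"] by (auto simp: Res_it)

lemma bdry_Res: "bdry m vbl (Res n m Dom vbl A \<sigma>) \<subseteq> snd (it \<sigma> (Suc m))"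
  using it_stop[of \<sigma>] by (auto simp: Res_it)

lemma vblS_mono: "S \<subseteq> T \<Longrightarrow> vblS vbl S \<subseteq> vblS vbl T"
  by (auto simp: vblS_def)

lemma N_inv: "i \<in> snd (it \<sigma> k) \<Longrightarrow> \<tau> \<in> assignments n Dom \<Longrightarrow>
   (\<forall>j\<in>vbl i \<inter> vblS vbl (fst (it \<sigma> k)). \<tau> j = \<sigma> j) \<Longrightarrow> \<tau> \<notin> A i"
proof (induction k arbitrary: i)
  case 0 then show ?case by (simp add: it_def)
next
  case (Suc k)
  let ?R = "fst (it \<sigma> k)"
  have agree: "\<forall>j\<in>vbl i \<inter> vblS vbl ?R. \<tau> j = \<sigma> j"
    using Suc.prems(3) vblS_mono[OF g_mono(1)[of "it \<sigma> k" \<sigma>]] by (auto simp: it_Suc)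
  show ?case
  proof (cases "i \<in> snd (it \<sigma> k)")
    case True
    then show ?thesis using Suc.IH Suc.prems agree by blast
  next
    case False
    then have iC: "i \<in> bdry m vbl ?R" and nm: "\<not> meets n Dom vbl A i \<sigma> ?R"
      using Suc.prems(1) by (auto simp: it_Suc res_step_def Let_def)
    from iC have ne: "vbl i \<inter> vblS vbl ?R \<noteq> {}" by (auto simp: bdry_def vblS_def)
    have "\<not> (\<exists>\<tau>\<in>assignments n Dom. (\<forall>j\<in>vbl i \<inter> vblS vbl ?R. \<tau> j = \<sigma> j) \<and> \<tau> \<in> A i)"
      using nm ne unfolding meets_def by simp
    then show ?thesis using Suc.prems(2) agree by blast
  qed
qed

end

context gprs begin

abbreviation "Rs \<sigma> \<equiv> Res n m Dom vbl A \<sigma>"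
definition "E J = {\<sigma>. \<forall>i\<in>J. \<sigma> \<notin> A i}"
definition "Jc R = {i. i < m \<and> i \<notin> R \<and> vbl i \<inter> vblS vbl R = {}}"

lemma Jc_sub: "Jc R \<subseteq> {..<m}" by (auto simp: Jc_def)

lemma K2: "\<sigma> \<in> E (Jc (Rs \<sigma>))"
  using Bad_Res[of \<sigma>] by (auto simp: E_def Jc_def Bad_def)

lemma meets_cong:
  assumes "\<forall>j\<in>vblS vbl R. \<sigma> j = \<sigma>' j"
  shows "meets n Dom vbl A i \<sigma> R = meets n Dom vbl A i \<sigma>' R"
  using assms unfolding meets_def by auto

lemma g_cong:
  assumes "\<forall>j\<in>vblS vbl (fst s). \<sigma> j = \<sigma>' j"
  shows "g \<sigma> s = g \<sigma>' s"
  using meets_cong[OF assms] by (simp add: res_step_def Let_def)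

lemma vbl_in_vblS: "i \<in> R \<Longrightarrow> vbl i \<subseteq> vblS vbl R"
  by (auto simp: vblS_def)

lemma merge_S:
  assumes "\<sigma>1 \<in> set_pmf mu" "\<sigma>2 \<in> set_pmf mu"
  shows "(\<lambda>j. if j \<in> V then \<sigma>2 j else \<sigma>1 j) \<in> set_pmf mu"
  using assms by (auto simp: set_mu)

lemma in_bdry:
  assumes "i < m" "i \<notin> R" "vbl i \<inter> vblS vbl R \<noteq> {}"
  shows "i \<in> bdry m vbl R"
  using assms by (auto simp: bdry_def vblS_def)

lemma N_final:
  assumes "\<sigma>0 \<in> set_pmf mu" "i < m" "i \<notin> Rs \<sigma>0" "vbl i \<inter> vblS vbl (Rs \<sigma>0) \<noteq> {}"
    "\<tau> \<in> assignments n Dom" "\<forall>j\<in>vbl i \<inter> vblS vbl (Rs \<sigma>0). \<tau> j = \<sigma>0 j"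
  shows "\<tau> \<notin> A i"
proof -
  have "i \<in> snd (it \<sigma>0 (Suc m))" using bdry_Res in_bdry[OF assms(2-4)] by blast
  then show ?thesis using N_inv[of i \<sigma>0 "Suc m" \<tau>] assms(5,6) by (simp add: Res_it)
qed

lemma K3:
  assumes s1: "\<sigma>1 \<in> set_pmf mu" and s2: "\<sigma>2 \<in> set_pmf mu" and R: "Rs \<sigma>2 = R"
    and E1: "\<sigma>1 \<in> E (Jc R)"
  shows "Rs (\<lambda>j. if j \<in> vblS vbl R then \<sigma>2 j else \<sigma>1 j) = R"
proof -
  define V where "V = vblS vbl R"
  define \<sigma> where "\<sigma> = (\<lambda>j. if j \<in> V then \<sigma>2 j else \<sigma>1 j)"
  have sS: "\<sigma> \<in> set_pmf mu" unfolding \<sigma>_def by (rule merge_S[OF s1 s2])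
  have bad: "Bad m A \<sigma> = Bad m A \<sigma>2"
  proof -
    have "\<sigma> \<in> A i \<longleftrightarrow> \<sigma>2 \<in> A i" if i: "i < m" for i
    proof (cases "i \<in> R")
      case True
      then have "vbl i \<subseteq> V" by (simp add: V_def vbl_in_vblS)
      then have "\<forall>j\<in>vbl i. \<sigma> j = \<sigma>2 j" by (auto simp: \<sigma>_def)
      then show ?thesis using determined[OF i] by blast
    next
      case False
      show ?thesis
      proof (cases "vbl i \<inter> V = {}")
        case True
        then have "i \<in> Jc R" using i False by (simp add: Jc_def V_def)
        then have "\<sigma>1 \<notin> A i" using E1 by (simp add: E_def)
        moreover have "\<forall>j\<in>vbl i. \<sigma> j = \<sigma>1 j" using True by (auto simp: \<sigma>_def)
        then have "\<sigma> \<in> A i \<longleftrightarrow> \<sigma>1 \<in> A i" using determined[OF i] by blast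
        moreover have "\<sigma>2 \<notin> A i" using Bad_Res[of \<sigma>2] False i R by (auto simp: Bad_def)
        ultimately show ?thesis by simp
      next
        case ne: False
        have "\<sigma>2 \<notin> A i"
          using N_final[OF s2 i, of \<sigma>2] False ne R mu_assign[OF s2] by (simp add: V_def)
        moreover have "\<sigma> \<notin> A i"
          using N_final[OF s2 i, of \<sigma>] False ne R mu_assign[OF sS] by (simp add: V_def \<sigma>_def)
        ultimately show ?thesis by simp
      qed
    qed
    then show ?thesis by (auto simp: Bad_def)
  qed
  have "it \<sigma> k = it \<sigma>2 k" for k
  proof (induction k)
    case 0 then show ?case by (simp add: it_def bad)
  next
    case (Suc k)
    have "vblS vbl (fst (it \<sigma>2 k)) \<subseteq> V"
      using vblS_mono[OF it_le_Res[of \<sigma>2 k]] R by (simp add: V_def)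
    then have "\<forall>j\<in>vblS vbl (fst (it \<sigma>2 k)). \<sigma> j = \<sigma>2 j" by (auto simp: \<sigma>_def)
    then show ?case using Suc by (simp add: it_Suc g_cong)
  qed
  then show ?thesis using R by (simp add: Res_it \<sigma>_def V_def)
qed

lemma K4:
  assumes s0: "\<sigma>0 \<in> set_pmf mu" and R: "Rs \<sigma>0 = R" and E0: "\<sigma>0 \<in> E I" and I: "I \<subseteq> {..<m}"
    and sS: "\<sigma> \<in> set_pmf mu" and agree: "\<forall>j\<in>vblS vbl R. \<sigma> j = \<sigma>0 j"
    and EJ: "\<sigma> \<in> E (Jc R)"
  shows "\<sigma> \<in> E I"
  unfolding E_def mem_Collect_eq
proof (intro ballI)
  fix i assume iI: "i \<in> I"
  then have i: "i < m" using I by auto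
  have n0: "\<sigma>0 \<notin> A i" using E0 iI by (simp add: E_def)
  show "\<sigma> \<notin> A i"
  proof (cases "i \<in> R")
    case True
    then have "vbl i \<subseteq> vblS vbl R" by (rule vbl_in_vblS)
    then show ?thesis using determined[OF i, of \<sigma> \<sigma>0] agree n0 by auto
  next
    case False
    show ?thesis
    proof (cases "vbl i \<inter> vblS vbl R = {}")
      case True
      then have "i \<in> Jc R" using i False by (simp add: Jc_def)
      then show ?thesis using EJ by (simp add: E_def)
    next
      case ne: False
      show ?thesis
        using N_final[OF s0 i, of \<sigma>] False ne R mu_assign[OF sS] agree by simp
    qed
  qed
qed

lemma Res_empty_iff: "Rs \<sigma> = {} \<longleftrightarrow> Bad m A \<sigma> = {}"
proof
  assume "Rs \<sigma> = {}" then show "Bad m A \<sigma> = {}" using Bad_Res[of \<sigma>] by auto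
next
  assume b: "Bad m A \<sigma> = {}"
  have "\<not> bb (it \<sigma> 0)" using b by (simp add: it_def bdry_def)
  then have "it \<sigma> (Suc m) = it \<sigma> 0" using it_stop it_fix_eq by blast
  then show "Rs \<sigma> = {}" using b by (simp add: Res_it it_def)
qed

lemma Good_E: "Bad m A \<sigma> = {} \<Longrightarrow> J \<subseteq> {..<m} \<Longrightarrow> \<sigma> \<in> E J"
  by (auto simp: E_def Bad_def)

end

lemma D2: "ennreal (spmf (bind_pmf p (\<lambda>a. if F a then X else return_pmf None)) x)
   = emeasure (measure_pmf p) {a. F a} * ennreal (spmf X x)"
proof -
  have "ennreal (spmf (bind_pmf p (\<lambda>a. if F a then X else return_pmf None)) x)
      = (\<integral>\<^sup>+ a. ennreal (spmf X x) * indicator {a. F a} a \<partial>measure_pmf p)"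
    unfolding ennreal_pmf_bind by (intro nn_integral_cong) (auto simp: indicator_def)
  also have "\<dots> = ennreal (spmf X x) * emeasure (measure_pmf p) {a. F a}"
    by (simp add: nn_integral_cmult_indicator)
  finally show ?thesis by (simp add: mult.commute)
qed

lemma D3: "ennreal (spmf (bind_pmf p (\<lambda>\<sigma>. if \<sigma> \<in> C then return_spmf \<sigma> else return_pmf None)) x)
   = (if x \<in> C then ennreal (pmf p x) else 0)"
proof -
  have "ennreal (spmf (bind_pmf p (\<lambda>\<sigma>. if \<sigma> \<in> C then return_spmf \<sigma> else return_pmf None)) x)
      = (\<integral>\<^sup>+ \<sigma>. (if x \<in> C then indicator {x} \<sigma> else 0) \<partial>measure_pmf p)"
    unfolding ennreal_pmf_bind by (intro nn_integral_cong) (auto simp: indicator_def)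
  also have "\<dots> = (if x \<in> C then ennreal (pmf p x) else 0)"
    by (simp add: emeasure_pmf_single)
  finally show ?thesis .
qed

lemma if_nest: "(if c then a else (if c then b else e)) = (if c then a else e)" by simp

context gprs begin

lemma D1:
  assumes V: "V \<subseteq> {0..<n}"
  shows "mu = map_pmf (\<lambda>(a,b) x. if x \<in> V then a x else b x)
                 (pair_pmf (Pi_pmf V d P) (Pi_pmf ({0..<n} - V) d P))"
proof -
  have fV: "finite V" using V finite_subset by blast
  have eq: "V \<union> ({0..<n} - V) = {0..<n}" using V by auto
  have "mu = Pi_pmf (V \<union> ({0..<n} - V)) d P" by (simp only: eq prod_dist_def)
  also have "\<dots> = map_pmf (\<lambda>(a,b) x. if x \<in> V then a x else b x)
                 (pair_pmf (Pi_pmf V d P) (Pi_pmf ({0..<n} - V) d P))"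
    by (rule Pi_pmf_union) (auto simp: fV)
  finally show ?thesis .
qed

lemma PL:
  fixes k :: "(nat \<Rightarrow> 'd) \<Rightarrow> (nat \<Rightarrow> 'd) spmf"
  assumes V: "V \<subseteq> {0..<n}"
  defines "pV \<equiv> Pi_pmf V d P" and "pW \<equiv> Pi_pmf ({0..<n} - V) d P"
  assumes hCG: "\<And>a b. a \<in> set_pmf pV \<Longrightarrow> b \<in> set_pmf pW \<Longrightarrow>
        ((\<lambda>x. if x \<in> V then a x else b x) \<in> C \<longleftrightarrow> Fp a \<and> (\<lambda>x. if x \<in> V then a x else b x) \<in> G)"
    and hG: "\<And>a a' b. a \<in> set_pmf pV \<Longrightarrow> a' \<in> set_pmf pV \<Longrightarrow> b \<in> set_pmf pW \<Longrightarrow>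
        ((\<lambda>x. if x \<in> V then a x else b x) \<in> G \<longleftrightarrow> (\<lambda>x. if x \<in> V then a' x else b x) \<in> G)"
  shows "bind_pmf mu (\<lambda>\<sigma>. if \<sigma> \<in> C then bind_pmf pV (\<lambda>\<tau>. k (\<lambda>j. if j \<in> V then \<tau> j else \<sigma> j)) else return_pmf None)
       = bind_pmf pV (\<lambda>a. if Fp a then bind_pmf mu (\<lambda>\<rho>. if \<rho> \<in> G then k \<rho> else return_pmf None) else return_pmf None)"
proof -
  define h where "h = (\<lambda>a b x. if x \<in> V then a x else (b x :: 'd))"
  have hh: "(\<lambda>j. if j \<in> V then \<tau> j else h a b j) = h \<tau> b" for \<tau> a b by (auto simp: h_def)
  have mu_eq: "mu = bind_pmf pV (\<lambda>a. bind_pmf pW (\<lambda>b. return_pmf (h a b)))"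
    unfolding D1[OF V] pV_def pW_def h_def
    by (simp add: pair_pmf_def map_pmf_def bind_assoc_pmf bind_return_pmf)
  have "bind_pmf mu (\<lambda>\<sigma>. if \<sigma> \<in> C then bind_pmf pV (\<lambda>\<tau>. k (\<lambda>j. if j \<in> V then \<tau> j else \<sigma> j)) else return_pmf None)
     = bind_pmf pV (\<lambda>a. bind_pmf pW (\<lambda>b. if h a b \<in> C then bind_pmf pV (\<lambda>\<tau>. k (h \<tau> b)) else return_pmf None))"
    unfolding mu_eq by (simp add: bind_assoc_pmf bind_return_pmf hh cong: if_cong)
  also have "\<dots> = bind_pmf pV (\<lambda>a. if Fp a then bind_pmf pW (\<lambda>b. if h a b \<in> G then bind_pmf pV (\<lambda>\<tau>. k (h \<tau> b)) else return_pmf None) else return_pmf None)"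
  proof (intro bind_pmf_cong refl)
    fix a assume a: "a \<in> set_pmf pV"
    show "bind_pmf pW (\<lambda>b. if h a b \<in> C then bind_pmf pV (\<lambda>\<tau>. k (h \<tau> b)) else return_pmf None)
       = (if Fp a then bind_pmf pW (\<lambda>b. if h a b \<in> G then bind_pmf pV (\<lambda>\<tau>. k (h \<tau> b)) else return_pmf None) else return_pmf None)"
    proof (cases "Fp a")
      case True
      then show ?thesis using hCG[OF a] by (auto simp: h_def intro!: bind_pmf_cong)
    next
      case False
      then have "bind_pmf pW (\<lambda>b. if h a b \<in> C then bind_pmf pV (\<lambda>\<tau>. k (h \<tau> b)) else return_pmf None)
          = bind_pmf pW (\<lambda>b. return_pmf None)"
        by (intro bind_pmf_cong refl) (use hCG[OF a] False in \<open>auto simp: h_def\<close>)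
      then show ?thesis using False by (simp add: bind_pmf_const)
    qed
  qed
  also have "\<dots> = bind_pmf pV (\<lambda>a. if Fp a then bind_pmf mu (\<lambda>\<rho>. if \<rho> \<in> G then k \<rho> else return_pmf None) else return_pmf None)"
  proof (intro bind_pmf_cong refl)
    fix a assume a: "a \<in> set_pmf pV"
    have Q: "bind_pmf mu (\<lambda>\<rho>. if \<rho> \<in> G then k \<rho> else return_pmf None)
       = bind_pmf pW (\<lambda>b. bind_pmf pV (\<lambda>\<tau>. if h \<tau> b \<in> G then k (h \<tau> b) else return_pmf None))"
      unfolding mu_eq by (simp add: bind_assoc_pmf bind_return_pmf bind_commute_pmf[of pV pW])
    have "bind_pmf pW (\<lambda>b. if h a b \<in> G then bind_pmf pV (\<lambda>\<tau>. k (h \<tau> b)) else return_pmf None)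
       = bind_pmf pW (\<lambda>b. bind_pmf pV (\<lambda>\<tau>. if h \<tau> b \<in> G then k (h \<tau> b) else return_pmf None))"
    proof (intro bind_pmf_cong refl)
      fix b assume b: "b \<in> set_pmf pW"
      show "(if h a b \<in> G then bind_pmf pV (\<lambda>\<tau>. k (h \<tau> b)) else return_pmf None)
         = bind_pmf pV (\<lambda>\<tau>. if h \<tau> b \<in> G then k (h \<tau> b) else return_pmf None)"
      proof (cases "h a b \<in> G")
        case True
        then show ?thesis using hG[OF a _ b] by (auto simp: h_def intro!: bind_pmf_cong)
      next
        case False
        then have "bind_pmf pV (\<lambda>\<tau>. if h \<tau> b \<in> G then k (h \<tau> b) else return_pmf None)
             = bind_pmf pV (\<lambda>\<tau>. return_pmf None)"
          by (intro bind_pmf_cong refl) (use hG[OF a _ b] False in \<open>auto simp: h_def\<close>)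
        then show ?thesis using False by (simp add: bind_pmf_const)
      qed
    qed
    then show "(if Fp a then bind_pmf pW (\<lambda>b. if h a b \<in> G then bind_pmf pV (\<lambda>\<tau>. k (h \<tau> b)) else return_pmf None) else return_pmf None)
       = (if Fp a then bind_pmf mu (\<lambda>\<rho>. if \<rho> \<in> G then k \<rho> else return_pmf None) else return_pmf None)"
      using Q by simp
  qed
  finally show ?thesis .
qed

end

lemma mcont_mult_ennreal:
  assumes "mcont lub ord Sup (\<le>) f"
  shows "mcont lub ord Sup (\<le>) (\<lambda>x. f x * (c::ennreal))"
  unfolding mcont_def
proof
  show "monotone ord (\<le>) (\<lambda>x. f x * c)"
    using mcont_mono[OF assms] by (auto simp: monotone_def intro: mult_right_mono)
  show "cont lub ord Sup (\<le>) (\<lambda>x. f x * c)"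
  proof (rule contI)
    fix Y assume "Complete_Partial_Order.chain ord Y" "Y \<noteq> {}"
    then have "f (lub Y) = Sup (f ` Y)" using mcont_contD[OF assms] by blast
    then show "f (lub Y) * c = Sup ((\<lambda>x. f x * c) ` Y)" by (simp add: SUP_mult_right_ennreal)
  qed
qed

context gprs begin

definition "GS = {\<sigma>. Bad m A \<sigma> = {}} \<inter> set_pmf mu"
definition "PropE \<phi> \<longleftrightarrow> (\<forall>x. x \<notin> GS \<longrightarrow> \<phi> x = 0) \<and>
   (\<forall>x y. x \<in> GS \<longrightarrow> y \<in> GS \<longrightarrow> \<phi> x * ennreal (pmf mu y) = \<phi> y * ennreal (pmf mu x))"
definition "Lf f J = bind_pmf mu (\<lambda>\<sigma>. if \<sigma> \<in> E J then f \<sigma> else return_pmf None)"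
definition "Inv f \<longleftrightarrow> (\<forall>J. J \<subseteq> {..<m} \<longrightarrow> PropE (\<lambda>x. ennreal (spmf (Lf f J) x)))"
definition "body f \<sigma> = (if Bad m A \<sigma> = {} then return_spmf \<sigma>
   else bind_pmf (Pi_pmf (vblS vbl (Rs \<sigma>)) d P) (\<lambda>\<tau>. f (\<lambda>j. if j \<in> vblS vbl (Rs \<sigma>) then \<tau> j else \<sigma> j)))"

lemma PropE_cmult: "PropE \<phi> \<Longrightarrow> PropE (\<lambda>x. c * \<phi> x)"
  unfolding PropE_def by (simp add: mult.assoc)

lemma PropE_sum:
  assumes "finite I" "\<And>R. R \<in> I \<Longrightarrow> PropE (\<psi> R)"
  shows "PropE (\<lambda>x. \<Sum>R\<in>I. \<psi> R x)"
  unfolding PropE_def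
proof (intro conjI allI impI)
  fix x assume "x \<notin> GS"
  then show "(\<Sum>R\<in>I. \<psi> R x) = 0" using assms(2) by (simp add: PropE_def)
next
  fix x y assume "x \<in> GS" "y \<in> GS"
  then show "(\<Sum>R\<in>I. \<psi> R x) * ennreal (pmf mu y) = (\<Sum>R\<in>I. \<psi> R y) * ennreal (pmf mu x)"
    using assms(2) unfolding sum_distrib_right by (intro sum.cong refl) (simp add: PropE_def)
qed

lemma PropE_point:
  assumes "GS \<subseteq> C0" "\<And>x. x \<in> C0 \<Longrightarrow> Bad m A x = {}"
  shows "PropE (\<lambda>x. if x \<in> C0 then ennreal (pmf mu x) else 0)"
  unfolding PropE_def
proof (intro conjI allI impI)
  fix x assume x: "x \<notin> GS"
  show "(if x \<in> C0 then ennreal (pmf mu x) else 0) = 0"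
  proof (cases "x \<in> C0")
    case True
    then have "x \<notin> set_pmf mu" using x assms(2) by (auto simp: GS_def)
    then show ?thesis by (simp add: set_pmf_iff)
  qed simp
next
  fix x y assume "x \<in> GS" "y \<in> GS"
  then show "(if x \<in> C0 then ennreal (pmf mu x) else 0) * ennreal (pmf mu y) =
             (if y \<in> C0 then ennreal (pmf mu y) else 0) * ennreal (pmf mu x)"
    using assms(1) by (auto simp: mult.commute)
qed

lemma set_PiV:
  assumes "a \<in> set_pmf (Pi_pmf V d P)" "finite V"
  shows "\<forall>x. (x \<in> V \<longrightarrow> a x \<in> set_pmf (P x)) \<and> (x \<notin> V \<longrightarrow> a x = d)"
  using assms by (simp add: set_Pi_pmf PiE_dflt_def)

lemma step:
  assumes IH: "Inv f"
  shows "Inv (body f)"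
  unfolding Inv_def
proof (intro allI impI)
  fix J assume J: "J \<subseteq> {..<m}"
  define kR where "kR R \<sigma> = (if Rs \<sigma> = R \<and> \<sigma> \<in> E J then body f \<sigma> else return_pmf None)" for R \<sigma>
  have dec: "ennreal (spmf (Lf (body f) J) x) = (\<Sum>R\<in>Pow {..<m}. ennreal (spmf (bind_pmf mu (kR R)) x))" for x
  proof -
    have "ennreal (spmf (Lf (body f) J) x)
        = (\<integral>\<^sup>+\<sigma>. ennreal (spmf (if \<sigma> \<in> E J then body f \<sigma> else return_pmf None) x) \<partial>measure_pmf mu)"
      unfolding Lf_def ennreal_pmf_bind ..
    also have "\<dots> = (\<integral>\<^sup>+\<sigma>. (\<Sum>R\<in>Pow {..<m}. ennreal (spmf (kR R \<sigma>) x)) \<partial>measure_pmf mu)"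
    proof (intro nn_integral_cong)
      fix \<sigma>
      have "(\<Sum>R\<in>Pow {..<m}. ennreal (spmf (kR R \<sigma>) x))
          = (\<Sum>R\<in>Pow {..<m}. if R = Rs \<sigma> then ennreal (spmf (if \<sigma> \<in> E J then body f \<sigma> else return_pmf None) x) else 0)"
        by (intro sum.cong refl) (auto simp: kR_def)
      also have "\<dots> = ennreal (spmf (if \<sigma> \<in> E J then body f \<sigma> else return_pmf None) x)"
        using Res_sub[of \<sigma>] by (simp add: sum.delta)
      finally show "ennreal (spmf (if \<sigma> \<in> E J then body f \<sigma> else return_pmf None) x)
          = (\<Sum>R\<in>Pow {..<m}. ennreal (spmf (kR R \<sigma>) x))" by simp
    qed
    also have "\<dots> = (\<Sum>R\<in>Pow {..<m}. \<integral>\<^sup>+\<sigma>. ennreal (spmf (kR R \<sigma>) x) \<partial>measure_pmf mu)"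
      by (rule nn_integral_sum) simp
    also have "\<dots> = (\<Sum>R\<in>Pow {..<m}. ennreal (spmf (bind_pmf mu (kR R)) x))"
      by (simp add: ennreal_pmf_bind)
    finally show ?thesis .
  qed
  have each: "PropE (\<lambda>x. ennreal (spmf (bind_pmf mu (kR R)) x))" if R: "R \<in> Pow {..<m}" for R
  proof (cases "R = {}")
    case True
    define C0 where "C0 = {\<sigma>. Rs \<sigma> = {} \<and> \<sigma> \<in> E J}"
    have "bind_pmf mu (kR R) = bind_pmf mu (\<lambda>\<sigma>. if \<sigma> \<in> C0 then return_spmf \<sigma> else return_pmf None)"
      by (intro bind_pmf_cong refl) (auto simp: kR_def C0_def True body_def Res_empty_iff)
    then have eq: "(\<lambda>x. ennreal (spmf (bind_pmf mu (kR R)) x)) = (\<lambda>x. if x \<in> C0 then ennreal (pmf mu x) else 0)"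
      by (simp add: D3)
    show ?thesis unfolding eq
      by (rule PropE_point) (auto simp: C0_def GS_def Res_empty_iff Good_E[OF _ J])
  next
    case Rne: False
    define V where "V = vblS vbl R"
    have V: "V \<subseteq> {0..<n}" using R vbl_sub by (auto simp: V_def vblS_def)
    have fV: "finite V" using V finite_subset by blast
    define C where "C = {\<sigma>. Rs \<sigma> = R \<and> \<sigma> \<in> E J}"
    define Fp where "Fp a = (\<exists>\<sigma>0\<in>C \<inter> set_pmf mu. \<forall>j\<in>V. \<sigma>0 j = a j)" for a
    have kR_eq: "bind_pmf mu (kR R) = bind_pmf mu (\<lambda>\<sigma>. if \<sigma> \<in> C then bind_pmf (Pi_pmf V d P) (\<lambda>\<tau>. f (\<lambda>j. if j \<in> V then \<tau> j else \<sigma> j)) else return_pmf None)"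
    proof (intro bind_pmf_cong refl)
      fix \<sigma>
      show "kR R \<sigma> = (if \<sigma> \<in> C then bind_pmf (Pi_pmf V d P) (\<lambda>\<tau>. f (\<lambda>j. if j \<in> V then \<tau> j else \<sigma> j)) else return_pmf None)"
      proof (cases "\<sigma> \<in> C")
        case True
        then have "Bad m A \<sigma> \<noteq> {}" using Rne Res_empty_iff[of \<sigma>] by (auto simp: C_def)
        then show ?thesis using True by (simp add: kR_def C_def body_def V_def)
      qed (auto simp: kR_def C_def)
    qed
    have hS: "(\<lambda>x. if x \<in> V then a x else b x) \<in> set_pmf mu"
      if a: "a \<in> set_pmf (Pi_pmf V d P)" and b: "b \<in> set_pmf (Pi_pmf ({0..<n} - V) d P)" for a b
      using set_PiV[OF a fV] set_PiV[OF b] V unfolding set_mu by auto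
    have "bind_pmf mu (kR R) = bind_pmf (Pi_pmf V d P) (\<lambda>a. if Fp a then Lf f (Jc R) else return_pmf None)"
      unfolding kR_eq Lf_def
    proof (rule PL[OF V])
      fix a b assume a: "a \<in> set_pmf (Pi_pmf V d P)" and b: "b \<in> set_pmf (Pi_pmf ({0..<n} - V) d P)"
      define \<sigma> where "\<sigma> = (\<lambda>x. if x \<in> V then a x else b x)"
      have sS: "\<sigma> \<in> set_pmf mu" unfolding \<sigma>_def using hS[OF a b] .
      show "(\<lambda>x. if x \<in> V then a x else b x) \<in> C \<longleftrightarrow> Fp a \<and> (\<lambda>x. if x \<in> V then a x else b x) \<in> E (Jc R)"
        unfolding \<sigma>_def[symmetric]
      proof
        assume "\<sigma> \<in> C"
        then show "Fp a \<and> \<sigma> \<in> E (Jc R)"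
          using K2[of \<sigma>] sS unfolding Fp_def by (auto simp: C_def \<sigma>_def intro!: bexI[of _ \<sigma>])
      next
        assume "Fp a \<and> \<sigma> \<in> E (Jc R)"
        then obtain \<sigma>0 where s0: "\<sigma>0 \<in> C" "\<sigma>0 \<in> set_pmf mu" and ag: "\<forall>j\<in>V. \<sigma>0 j = a j"
          and EJ: "\<sigma> \<in> E (Jc R)" unfolding Fp_def by blast
        have ag2: "\<forall>j\<in>vblS vbl R. \<sigma> j = \<sigma>0 j" using ag by (simp add: \<sigma>_def V_def)
        have "(\<lambda>j. if j \<in> vblS vbl R then \<sigma>0 j else \<sigma> j) = \<sigma>" using ag2 by auto
        then have "Rs \<sigma> = R" using K3[OF sS s0(2) _ EJ] s0(1) by (simp add: C_def)
        moreover have "\<sigma> \<in> E J" using K4[OF s0(2) _ _ J sS ag2 EJ] s0(1) by (simp add: C_def)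
        ultimately show "\<sigma> \<in> C" by (simp add: C_def)
      qed
    next
      fix a a' b assume a: "a \<in> set_pmf (Pi_pmf V d P)" and a': "a' \<in> set_pmf (Pi_pmf V d P)"
        and b: "b \<in> set_pmf (Pi_pmf ({0..<n} - V) d P)"
      have "(\<lambda>x. if x \<in> V then a x else b x) \<in> A i \<longleftrightarrow> (\<lambda>x. if x \<in> V then a' x else b x) \<in> A i"
        if i: "i \<in> Jc R" for i
      proof -
        have im: "i < m" and dj: "vbl i \<inter> V = {}" using i by (auto simp: Jc_def V_def)
        have "\<forall>j\<in>vbl i. (\<lambda>x. if x \<in> V then a x else b x) j = (\<lambda>x. if x \<in> V then a' x else b x) j"
          using dj by auto
        then show ?thesis by (rule determined[OF im])
      qed
      then show "(\<lambda>x. if x \<in> V then a x else b x) \<in> E (Jc R) \<longleftrightarrow> (\<lambda>x. if x \<in> V then a' x else b x) \<in> E (Jc R)"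
        by (auto simp: E_def)
    qed
    then have eq: "(\<lambda>x. ennreal (spmf (bind_pmf mu (kR R)) x))
        = (\<lambda>x. emeasure (measure_pmf (Pi_pmf V d P)) {a. Fp a} * ennreal (spmf (Lf f (Jc R)) x))"
      by (simp add: D2)
    show ?thesis unfolding eq
      by (rule PropE_cmult) (use IH Jc_sub in \<open>simp add: Inv_def\<close>)
  qed
  have "(\<lambda>x. ennreal (spmf (Lf (body f) J) x)) = (\<lambda>x. \<Sum>R\<in>Pow {..<m}. ennreal (spmf (bind_pmf mu (kR R)) x))"
    using dec by auto
  then show "PropE (\<lambda>x. ennreal (spmf (Lf (body f) J) x))"
    using PropE_sum[of "Pow {..<m}", OF _ each] by simp
qed

end

context gprs begin

lemma Inv_bot: "Inv (\<lambda>\<sigma>. return_pmf None)"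
  by (simp add: Inv_def PropE_def Lf_def)

lemma mcont_Lf:
  "mcont (fun_lub lub_spmf) (fun_ord (ord_spmf (=))) Sup (\<le>)
     (\<lambda>g. ennreal (spmf (bind_pmf mu (\<lambda>\<sigma>. if \<sigma> \<in> G then g (t \<sigma>) else return_pmf None)) x))"
  unfolding bind_spmf_of_pmf[symmetric]
  by (intro mcont2mcont_ennreal_spmf mcont_bind_spmf mcont_if mcont_call) simp_all

lemma adm:
  "spmf.admissible (\<lambda>g. Inv (\<lambda>\<sigma>. g (t \<sigma>)))"
  unfolding Inv_def PropE_def Lf_def
  apply (intro admissible_all admissible_imp admissible_conj)
    apply (rule admissible_eq_mcontI[where lub=Sup and ord="(\<le>)"])
     apply (rule mcont_Lf)
    apply simp
   apply (rule admissible_eq_mcontI[where lub=Sup and ord="(\<le>)"])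
    apply (rule mcont_mult_ennreal[OF mcont_Lf])
   apply (rule mcont_mult_ennreal[OF mcont_Lf])
  done

lemma Inv_loop: "Inv (gprs_loop P d (\<lambda>\<sigma>. Bad m A \<sigma> = {}) (\<lambda>\<sigma>. vblS vbl (Rs \<sigma>)))"
proof (induction rule: gprs_loop.fixp_induct[where P="\<lambda>F. Inv (F P d (\<lambda>\<sigma>. Bad m A \<sigma> = {}) (\<lambda>\<sigma>. vblS vbl (Rs \<sigma>)))"])
  case 1
  show ?case using adm[where t="\<lambda>\<sigma>. ((((P, d), \<lambda>\<sigma>. Bad m A \<sigma> = {}), \<lambda>\<sigma>. vblS vbl (Rs \<sigma>)), \<sigma>)"]
    by (simp add: curry_def)
next
  case 2
  show ?case by (rule Inv_bot)
next
  case (3 F)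
  show ?case using step[OF 3] unfolding body_def[abs_def] by (simp cong: if_cong)
qed

end

theorem theorem26:
  fixes n m :: nat and Dom :: "nat \<Rightarrow> 'd set" and P :: "nat \<Rightarrow> 'd pmf" and d :: 'd
    and vbl :: "nat \<Rightarrow> nat set" and A :: "nat \<Rightarrow> (nat \<Rightarrow> 'd) set"
  assumes ranges: "\<And>j. j < n \<Longrightarrow> set_pmf (P j) \<subseteq> Dom j"
    and vbl_sub: "\<And>i. i < m \<Longrightarrow> vbl i \<subseteq> {0..<n}"
    and determined: "\<And>i \<sigma> \<tau>. i < m \<Longrightarrow> (\<forall>j\<in>vbl i. \<sigma> j = \<tau> j) \<Longrightarrow> (\<sigma> \<in> A i \<longleftrightarrow> \<tau> \<in> A i)"
    and halts: "weight_spmf (GPRS n m Dom P d vbl A) > 0"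
  shows "\<forall>\<tau>. spmf (GPRS n m Dom P d vbl A) \<tau>
           = weight_spmf (GPRS n m Dom P d vbl A)
             * pmf (cond_pmf (prod_dist n P d) {\<sigma>. Bad m A \<sigma> = {}}) \<tau>"
proof -
  interpret gprs n m Dom P d vbl A
    by unfold_locales (use ranges vbl_sub determined in blast)+
  define Gp where "Gp = GPRS n m Dom P d vbl A"
  define Good where "Good = {\<sigma>. Bad m A (\<sigma>::nat \<Rightarrow> 'd) = {}}"
  have Gp_eq: "Gp = Lf (gprs_loop P d (\<lambda>\<sigma>. Bad m A \<sigma> = {}) (\<lambda>\<sigma>. vblS vbl (Rs \<sigma>))) {}"
    by (simp add: Gp_def GPRS_def Lf_def E_def)
  have PE: "PropE (\<lambda>x. ennreal (spmf Gp x))"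
    using Inv_loop unfolding Inv_def Gp_eq by auto
  have z: "spmf Gp x = 0" if "x \<notin> GS" for x
    using PE that by (simp add: PropE_def)
  have rel: "spmf Gp x * pmf mu y = spmf Gp y * pmf mu x" if "x \<in> GS" "y \<in> GS" for x y
  proof -
    have "ennreal (spmf Gp x) * ennreal (pmf mu y) = ennreal (spmf Gp y) * ennreal (pmf mu x)"
      using PE that by (simp add: PropE_def)
    then have "ennreal (spmf Gp x * pmf mu y) = ennreal (spmf Gp y * pmf mu x)"
      by (simp add: ennreal_mult'')
    then show ?thesis by (simp add: ennreal_inj)
  qed
  obtain y0 where y0: "spmf Gp y0 \<noteq> 0"
  proof (rule ccontr)
    assume "\<not> thesis"
    with that have "\<forall>x. spmf Gp x = 0" by blast
    then have "ennreal (weight_spmf Gp) = 0" by (simp add: weight_spmf_eq_nn_integral_spmf)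
    then show False using halts by (simp add: Gp_def)
  qed
  have y0GS: "y0 \<in> GS" using y0 z by blast
  then have y0S: "y0 \<in> set_pmf mu" and y0G: "y0 \<in> Good" by (auto simp: GS_def Good_def)
  have py0: "pmf mu y0 > 0" using y0S by (simp add: set_pmf_iff pmf_nonneg order_le_neq_trans)
  define c where "c = spmf Gp y0 / pmf mu y0"
  have c0: "c \<ge> 0" by (simp add: c_def)
  have form: "spmf Gp x = c * (if x \<in> Good then pmf mu x else 0)" for x
  proof (cases "x \<in> GS")
    case True
    then have "x \<in> Good" by (simp add: GS_def Good_def)
    moreover have "spmf Gp x * pmf mu y0 = spmf Gp y0 * pmf mu x" using rel[OF True y0GS] .
    ultimately show ?thesis using py0 by (simp add: c_def field_simps)
  next
    case False
    then have "x \<in> Good \<Longrightarrow> pmf mu x = 0" by (simp add: GS_def Good_def set_pmf_iff)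
    then show ?thesis using z[OF False] by simp
  qed
  have "ennreal (weight_spmf Gp) = (\<integral>\<^sup>+ x. ennreal (spmf Gp x) \<partial>count_space UNIV)"
    by (simp add: weight_spmf_eq_nn_integral_spmf)
  also have "\<dots> = (\<integral>\<^sup>+ x. ennreal c * (ennreal (pmf mu x) * indicator Good x) \<partial>count_space UNIV)"
    by (intro nn_integral_cong) (simp add: form ennreal_mult'' indicator_def c0)
  also have "\<dots> = ennreal c * (\<integral>\<^sup>+ x. indicator Good x \<partial>measure_pmf mu)"
    by (simp add: nn_integral_cmult nn_integral_measure_pmf)
  also have "\<dots> = ennreal (c * measure_pmf.prob mu Good)"
    by (simp add: measure_pmf.emeasure_eq_measure ennreal_mult'')
  finally have w: "weight_spmf Gp = c * measure_pmf.prob mu Good"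
    using c0 by (simp add: ennreal_inj weight_spmf_nonneg)
  have ne: "set_pmf mu \<inter> Good \<noteq> {}" using y0S y0G by blast
  then have M: "measure_pmf.prob mu Good \<noteq> 0" by (simp add: measure_pmf_zero_iff)
  show ?thesis
  proof
    fix \<tau>
    show "spmf (GPRS n m Dom P d vbl A) \<tau> = weight_spmf (GPRS n m Dom P d vbl A)
             * pmf (cond_pmf (prod_dist n P d) {\<sigma>. Bad m A \<sigma> = {}}) \<tau>"
      unfolding Gp_def[symmetric] Good_def[symmetric]
      using M by (simp add: pmf_cond[OF ne] w form)
  qed
qed

end
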